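(* Every bipartite TRVG on $n$ vertices has at most $2n-2$ edges. Moreover, this bound is best possible for $n\ge 7$: for every $n\ge 7$ there exists a bipartite TRVG on $n$ vertices with exactly $2n-2$ edges.
   Context: A graph $G$ is a transparent rectangle visibility graph (TRVG) if its vertices can be represented by a collection of pairwise non-overlapping rectangles in the plane whose sides are parallel to the coordinate axes, one per vertex, such that two distinct vertices are adjacent if and only if there is a horizontal or a vertical line intersecting the interiors of both of their rectangles (other rectangles do not block visibility). *)

theory Defs
  imports Complex_Main
begin

definition simple_graph :: "'a set \<Rightarrow> 'a set set \<Rightarrow> bool" where
  "simple_graph V E \<longleftrightarrow> finite V \<and>
     (\<forall>e\<in>E. \<exists>u v. e = {u, v} \<and> u \<noteq> v \<and> u \<in> V \<and> v \<in> V)"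

definition bipartite :: "'a set \<Rightarrow> 'a set set \<Rightarrow> bool" where
  "bipartite V E \<longleftrightarrow> (\<exists>A B. A \<union> B = V \<and> A \<inter> B = {} \<and>
     (\<forall>e\<in>E. e \<inter> A \<noteq> {} \<and> e \<inter> B \<noteq> {}))"

text \<open>An axis-parallel rectangle [x1,x2] x [y1,y2] with x1 < x2, y1 < y2,
  represented by ((x1,x2),(y1,y2)).\<close>
type_synonym rect = "(real \<times> real) \<times> (real \<times> real)"

definition proper_rect :: "rect \<Rightarrow> bool" where
  "proper_rect r \<longleftrightarrow> fst (fst r) < snd (fst r) \<and> fst (snd r) < snd (snd r)"

definition rect_interior :: "rect \<Rightarrow> (real \<times> real) set" where
  "rect_interior r = {fst (fst r)<..<snd (fst r)} \<times> {fst (snd r)<..<snd (snd r)}"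

definition hline :: "real \<Rightarrow> (real \<times> real) set" where
  "hline c = {p. snd p = c}"

definition vline :: "real \<Rightarrow> (real \<times> real) set" where
  "vline c = {p. fst p = c}"

definition rect_visible :: "rect \<Rightarrow> rect \<Rightarrow> bool" where
  "rect_visible r s \<longleftrightarrow>
     (\<exists>c. hline c \<inter> rect_interior r \<noteq> {} \<and> hline c \<inter> rect_interior s \<noteq> {}) \<or>
     (\<exists>c. vline c \<inter> rect_interior r \<noteq> {} \<and> vline c \<inter> rect_interior s \<noteq> {})"

definition TRVG :: "'a set \<Rightarrow> 'a set set \<Rightarrow> bool" where
  "TRVG V E \<longleftrightarrow> simple_graph V E \<and>
     (\<exists>R :: 'a \<Rightarrow> rect.
        (\<forall>v\<in>V. proper_rect (R v)) \<and>
        (\<forall>u\<in>V. \<forall>v\<in>V. u \<noteq> v \<longrightarrow> rect_interior (R u) \<inter> rect_interior (R v) = {}) \<and>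
        (\<forall>u\<in>V. \<forall>v\<in>V. u \<noteq> v \<longrightarrow> ({u, v} \<in> E \<longleftrightarrow> rect_visible (R u) (R v))))"

end

theory Submission
  imports Defs
begin


definition ov :: "real \<times> real \<Rightarrow> real \<times> real \<Rightarrow> bool" where
  "ov p q \<longleftrightarrow> fst p < snd q \<and> fst q < snd p"

lemma ex_common:
  fixes a1 a2 b1 b2 :: real
  assumes "a1 < a2" "b1 < b2"
  shows "(\<exists>c. a1 < c \<and> c < a2 \<and> b1 < c \<and> c < b2) \<longleftrightarrow> a1 < b2 \<and> b1 < a2"
proof
  assume "a1 < b2 \<and> b1 < a2"
  then show "\<exists>c. a1 < c \<and> c < a2 \<and> b1 < c \<and> c < b2" using assms
    by (intro exI[of _ "(max a1 b1 + min a2 b2)/2"]) (auto simp: max_def min_def)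
qed auto

lemma vis_iff:
  assumes "proper_rect r" "proper_rect s"
  shows "rect_visible r s \<longleftrightarrow> ov (snd r) (snd s) \<or> ov (fst r) (fst s)"
proof -
  have h: "hline c \<inter> rect_interior t \<noteq> {} \<longleftrightarrow> fst (snd t) < c \<and> c < snd (snd t)"
    if "proper_rect t" for c t
  proof
    assume "fst (snd t) < c \<and> c < snd (snd t)"
    then have "((fst (fst t) + snd (fst t))/2, c) \<in> hline c \<inter> rect_interior t"
      using that by (auto simp: hline_def rect_interior_def proper_rect_def)
    then show "hline c \<inter> rect_interior t \<noteq> {}" by blast
  qed (auto simp: hline_def rect_interior_def)
  have v: "vline c \<inter> rect_interior t \<noteq> {} \<longleftrightarrow> fst (fst t) < c \<and> c < snd (fst t)"
    if "proper_rect t" for c t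
  proof
    assume "fst (fst t) < c \<and> c < snd (fst t)"
    then have "(c, (fst (snd t) + snd (snd t))/2) \<in> vline c \<inter> rect_interior t"
      using that by (auto simp: vline_def rect_interior_def proper_rect_def)
    then show "vline c \<inter> rect_interior t \<noteq> {}" by blast
  qed (auto simp: vline_def rect_interior_def)
  have e1: "(\<exists>c. hline c \<inter> rect_interior r \<noteq> {} \<and> hline c \<inter> rect_interior s \<noteq> {}) \<longleftrightarrow> ov (snd r) (snd s)"
    using ex_common[of "fst (snd r)" "snd (snd r)" "fst (snd s)" "snd (snd s)"] assms
    by (simp add: h ov_def proper_rect_def)
  have e2: "(\<exists>c. vline c \<inter> rect_interior r \<noteq> {} \<and> vline c \<inter> rect_interior s \<noteq> {}) \<longleftrightarrow> ov (fst r) (fst s)"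
    using ex_common[of "fst (fst r)" "snd (fst r)" "fst (fst s)" "snd (fst s)"] assms
    by (simp add: v ov_def proper_rect_def)
  show ?thesis unfolding rect_visible_def e1 e2 ..
qed

lemma disj_iff:
  assumes "proper_rect r" "proper_rect s"
  shows "rect_interior r \<inter> rect_interior s = {} \<longleftrightarrow> \<not> (ov (snd r) (snd s) \<and> ov (fst r) (fst s))"
proof -
  have "rect_interior r \<inter> rect_interior s \<noteq> {} \<longleftrightarrow> (ov (snd r) (snd s) \<and> ov (fst r) (fst s))"
  proof
    assume "rect_interior r \<inter> rect_interior s \<noteq> {}"
    then obtain x y where "(x,y) \<in> rect_interior r" "(x,y) \<in> rect_interior s" by auto
    then show "ov (snd r) (snd s) \<and> ov (fst r) (fst s)"
      by (auto simp: rect_interior_def ov_def)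
  next
    assume a: "ov (snd r) (snd s) \<and> ov (fst r) (fst s)"
    obtain x where x: "fst (fst r) < x \<and> x < snd (fst r) \<and> fst (fst s) < x \<and> x < snd (fst s)"
      using ex_common[of "fst (fst r)" "snd (fst r)" "fst (fst s)" "snd (fst s)"] assms a
      by (auto simp: ov_def proper_rect_def)
    obtain y where y: "fst (snd r) < y \<and> y < snd (snd r) \<and> fst (snd s) < y \<and> y < snd (snd s)"
      using ex_common[of "fst (snd r)" "snd (snd r)" "fst (snd s)" "snd (snd s)"] assms a
      by (auto simp: ov_def proper_rect_def)
    have "(x,y) \<in> rect_interior r \<inter> rect_interior s" using x y by (auto simp: rect_interior_def)
    then show "rect_interior r \<inter> rect_interior s \<noteq> {}" by blast
  qed
  then show ?thesis by blast
qed

definition ovE :: "'a set \<Rightarrow> ('a \<Rightarrow> real \<times> real) \<Rightarrow> 'a set set" where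
  "ovE V I = {{u,v} | u v. u \<in> V \<and> v \<in> V \<and> u \<noteq> v \<and> ov (I u) (I v)}"

lemma forest_bound:
  assumes "finite V"
    and "\<forall>v\<in>V. fst (I v) < snd (I v)"
    and "\<forall>u\<in>V. \<forall>v\<in>V. \<forall>w\<in>V. u \<noteq> v \<and> v \<noteq> w \<and> u \<noteq> w \<longrightarrow>
           \<not> (ov (I u) (I v) \<and> ov (I v) (I w) \<and> ov (I u) (I w))"
  shows "card (ovE V I) \<le> card V - 1"
  using assms
proof (induction "card V" arbitrary: V rule: less_induct)
  case less
  show ?case
  proof (cases "V = {}")
    case True
    then show ?thesis by (simp add: ovE_def)
  next
    case False
    define m where "m = Min ((\<lambda>v. snd (I v)) ` V)"
    have "m \<in> (\<lambda>v. snd (I v)) ` V" unfolding m_def using less.prems(1) False by (intro Min_in) auto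
    then obtain w where w: "w \<in> V" "snd (I w) = m" by auto
    have wmin: "snd (I w) \<le> snd (I v)" if "v \<in> V" for v
      unfolding w(2) m_def using less.prems(1) that by (intro Min_le) auto
    define N where "N = {x. x \<in> V \<and> x \<noteq> w \<and> ov (I w) (I x)}"
    have Nsub: "\<forall>x\<in>N. \<forall>y\<in>N. x = y"
    proof (intro ballI, rule ccontr)
      fix x y assume xy: "x \<in> N" "y \<in> N" "x \<noteq> y"
      have "ov (I x) (I y)" using xy wmin unfolding N_def ov_def
        by (smt (verit) mem_Collect_eq)
      moreover have "ov (I w) (I x)" "ov (I w) (I y)" using xy unfolding N_def by auto
      ultimately show False using less.prems(3) xy w(1) unfolding N_def
        by (metis (mono_tags, lifting) mem_Collect_eq)
    qed
    have sub: "ovE V I \<subseteq> ovE (V - {w}) I \<union> (\<lambda>x. {w, x}) ` N"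
    proof
      fix e assume "e \<in> ovE V I"
      then obtain u v where e: "e = {u,v}" "u \<in> V" "v \<in> V" "u \<noteq> v" "ov (I u) (I v)"
        unfolding ovE_def by auto
      have ovs: "ov (I v) (I u)" using e(5) by (auto simp: ov_def)
      show "e \<in> ovE (V - {w}) I \<union> (\<lambda>x. {w, x}) ` N"
      proof (cases "u = w \<or> v = w")
        case True
        then show ?thesis
        proof
          assume "u = w" then show ?thesis using e unfolding N_def by auto
        next
          assume "v = w" then show ?thesis using e ovs unfolding N_def by (auto simp: insert_commute)
        qed
      next
        case False
        then show ?thesis using e unfolding ovE_def by blast
      qed
    qed
    have fin1: "finite (ovE (V - {w}) I)"
    proof -
      have "ovE (V - {w}) I \<subseteq> (\<lambda>(u,v). {u,v}) ` (V \<times> V)" unfolding ovE_def by auto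
      then show ?thesis using less.prems(1) finite_subset by blast
    qed
    have finN: "finite N" unfolding N_def using less.prems(1) by auto
    have cN: "card ((\<lambda>x. {w, x}) ` N) \<le> card N" by (rule card_image_le[OF finN])
    have cN1: "card N \<le> 1" using Nsub finN by (simp add: card_le_Suc0_iff_eq)
    have "card (ovE V I) \<le> card (ovE (V - {w}) I \<union> (\<lambda>x. {w, x}) ` N)"
      using sub fin1 finN by (intro card_mono) auto
    also have "\<dots> \<le> card (ovE (V - {w}) I) + card N"
      using card_Un_le[of "ovE (V - {w}) I" "(\<lambda>x. {w, x}) ` N"] cN by linarith
    finally have A: "card (ovE V I) \<le> card (ovE (V - {w}) I) + card N" .
    show ?thesis
    proof (cases "V - {w} = {}")
      case True
      then have "N = {}" unfolding N_def by auto
      moreover have "ovE (V - {w}) I = {}" using True by (auto simp: ovE_def)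
      ultimately show ?thesis using A by simp
    next
      case False
      have cv: "card (V - {w}) = card V - 1" using w(1) less.prems(1) by simp
      have "card V \<ge> 2"
      proof -
        obtain z where "z \<in> V" "z \<noteq> w" using False by auto
        then have "{w, z} \<subseteq> V" using w(1) by auto
        then have "card {w,z} \<le> card V" using less.prems(1) by (rule card_mono[rotated])
        then show ?thesis using \<open>z \<noteq> w\<close> by simp
      qed
      have IH: "card (ovE (V - {w}) I) \<le> card (V - {w}) - 1"
        using less.hyps[of "V - {w}"] less.prems w(1) less.prems(1)
        by (metis DiffD1 card_Diff1_less finite_Diff)
      show ?thesis using A IH cv cN1 \<open>card V \<ge> 2\<close> by linarith
    qed
  qed
qed

lemma part1:
  fixes V :: "'a set"
  assumes T: "TRVG V E" and B: "bipartite V E"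
  shows "card E \<le> 2 * card V - 2"
proof -
  have sg: "simple_graph V E" using T by (simp add: TRVG_def)
  have fin: "finite V" using sg by (simp add: simple_graph_def)
  obtain R where Rp: "\<forall>v\<in>V. proper_rect (R v)"
    and Rv: "\<forall>u\<in>V. \<forall>v\<in>V. u \<noteq> v \<longrightarrow> ({u, v} \<in> E \<longleftrightarrow> rect_visible (R u) (R v))"
    using T by (auto simp: TRVG_def)
  obtain A Bs where AB: "A \<union> Bs = V" "A \<inter> Bs = {}" "\<forall>e\<in>E. e \<inter> A \<noteq> {} \<and> e \<inter> Bs \<noteq> {}"
    using B by (auto simp: bipartite_def)
  have RvI: "\<And>a b. a \<in> V \<Longrightarrow> b \<in> V \<Longrightarrow> a \<noteq> b \<Longrightarrow> rect_visible (R a) (R b) \<Longrightarrow> {a,b} \<in> E"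
    using Rv by blast
  have side: "(u \<in> A) \<longleftrightarrow> (v \<notin> A)" if "u \<in> V" "v \<in> V" "{u,v} \<in> E" for u v
  proof -
    have h: "{u,v} \<inter> A \<noteq> {} \<and> {u,v} \<inter> Bs \<noteq> {}" by (rule bspec[OF AB(3) that(3)])
    from h obtain x y where xy: "x \<in> {u,v}" "x \<in> A" "y \<in> {u,v}" "y \<in> Bs" by blast
    have "y \<notin> A" using xy(4) AB(2) by blast
    then have "x \<noteq> y" using xy(2) by blast
    then have "(x = u \<and> y = v) \<or> (x = v \<and> y = u)" using xy(1,3) by blast
    then show ?thesis using xy(2) \<open>y \<notin> A\<close> by blast
  qed
  have tri: "\<not> (ov (I u) (I v) \<and> ov (I v) (I w) \<and> ov (I u) (I w))"
    if "u \<in> V" "v \<in> V" "w \<in> V" "u \<noteq> v" "v \<noteq> w" "u \<noteq> w"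
       and IV: "\<And>a b. a \<in> V \<Longrightarrow> b \<in> V \<Longrightarrow> ov (I a) (I b) \<Longrightarrow> rect_visible (R a) (R b)"
    for u v w I
  proof
    assume h: "ov (I u) (I v) \<and> ov (I v) (I w) \<and> ov (I u) (I w)"
    have e1: "{u,v} \<in> E" using h IV[of u v] RvI[of u v] that by blast
    have e2: "{v,w} \<in> E" using h IV[of v w] RvI[of v w] that by blast
    have e3: "{u,w} \<in> E" using h IV[of u w] RvI[of u w] that by blast
    have s1: "(u \<in> A) \<longleftrightarrow> (v \<notin> A)" by (rule side[OF that(1) that(2) e1])
    have s2: "(v \<in> A) \<longleftrightarrow> (w \<notin> A)" by (rule side[OF that(2) that(3) e2])
    have s3: "(u \<in> A) \<longleftrightarrow> (w \<notin> A)" by (rule side[OF that(1) that(3) e3])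
    from s1 s2 s3 show False by blast
  qed
  define Iy where "Iy = (\<lambda>v. snd (R v))"
  define Ix where "Ix = (\<lambda>v. fst (R v))"
  have visy: "rect_visible (R a) (R b)" if "a \<in> V" "b \<in> V" "ov (Iy a) (Iy b)" for a b
    using vis_iff[of "R a" "R b"] Rp that by (auto simp: Iy_def)
  have visx: "rect_visible (R a) (R b)" if "a \<in> V" "b \<in> V" "ov (Ix a) (Ix b)" for a b
    using vis_iff[of "R a" "R b"] Rp that by (auto simp: Ix_def)
  have cy: "card (ovE V Iy) \<le> card V - 1"
  proof (rule forest_bound)
    show "finite V" by (rule fin)
    show "\<forall>v\<in>V. fst (Iy v) < snd (Iy v)" using Rp by (auto simp: Iy_def proper_rect_def)
    show "\<forall>u\<in>V. \<forall>v\<in>V. \<forall>w\<in>V. u \<noteq> v \<and> v \<noteq> w \<and> u \<noteq> w \<longrightarrow>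
           \<not> (ov (Iy u) (Iy v) \<and> ov (Iy v) (Iy w) \<and> ov (Iy u) (Iy w))"
    proof (intro ballI impI)
      fix u v w assume "u \<in> V" "v \<in> V" "w \<in> V" "u \<noteq> v \<and> v \<noteq> w \<and> u \<noteq> w"
      then show "\<not> (ov (Iy u) (Iy v) \<and> ov (Iy v) (Iy w) \<and> ov (Iy u) (Iy w))"
        using tri[of u v w Iy] visy by blast
    qed
  qed
  have cx: "card (ovE V Ix) \<le> card V - 1"
  proof (rule forest_bound)
    show "finite V" by (rule fin)
    show "\<forall>v\<in>V. fst (Ix v) < snd (Ix v)" using Rp by (auto simp: Ix_def proper_rect_def)
    show "\<forall>u\<in>V. \<forall>v\<in>V. \<forall>w\<in>V. u \<noteq> v \<and> v \<noteq> w \<and> u \<noteq> w \<longrightarrow>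
           \<not> (ov (Ix u) (Ix v) \<and> ov (Ix v) (Ix w) \<and> ov (Ix u) (Ix w))"
    proof (intro ballI impI)
      fix u v w assume "u \<in> V" "v \<in> V" "w \<in> V" "u \<noteq> v \<and> v \<noteq> w \<and> u \<noteq> w"
      then show "\<not> (ov (Ix u) (Ix v) \<and> ov (Ix v) (Ix w) \<and> ov (Ix u) (Ix w))"
        using tri[of u v w Ix] visx by blast
    qed
  qed
  have sub: "E \<subseteq> ovE V Iy \<union> ovE V Ix"
  proof
    fix e assume "e \<in> E"
    then obtain u v where e: "e = {u,v}" "u \<noteq> v" "u \<in> V" "v \<in> V" using sg by (auto simp: simple_graph_def)
    then have "rect_visible (R u) (R v)" using Rv \<open>e \<in> E\<close> by auto
    then have "ov (Iy u) (Iy v) \<or> ov (Ix u) (Ix v)" using vis_iff[of "R u" "R v"] Rp e by (auto simp: Iy_def Ix_def)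
    then show "e \<in> ovE V Iy \<union> ovE V Ix" using e unfolding ovE_def by blast
  qed
  have fo: "finite (ovE V J)" for J
  proof -
    have "ovE V J \<subseteq> (\<lambda>(u,v). {u,v}) ` (V \<times> V)" unfolding ovE_def by auto
    then show ?thesis using fin finite_subset by blast
  qed
  have "card E \<le> card (ovE V Iy \<union> ovE V Ix)" using sub fo by (intro card_mono) auto
  also have "\<dots> \<le> card (ovE V Iy) + card (ovE V Ix)" by (rule card_Un_le)
  finally show ?thesis using cy cx by linarith
qed



definition ypos :: "nat \<Rightarrow> nat" where "ypos v = [0,2,4,6,1,3,5] ! v"
definition xpos :: "nat \<Rightarrow> nat" where "xpos v = [4,6,0,2,1,3,5] ! v"

definition yl :: "nat \<Rightarrow> nat \<Rightarrow> real" where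
  "yl n v = (if v = 0 then -2 * real n else if v < 7 then 2 * real (ypos v) else -2 * real v)"
definition yr :: "nat \<Rightarrow> nat \<Rightarrow> real" where
  "yr n v = (if v < 7 then 2 * real (ypos v) + 3 else -2 * real v + 1)"
definition xl :: "nat \<Rightarrow> nat \<Rightarrow> real" where
  "xl n v = (if v < 7 then 2 * real (xpos v) else 2 * real v)"
definition xr :: "nat \<Rightarrow> nat \<Rightarrow> real" where
  "xr n v = (if v = 1 then 2 * real n else if v < 7 then 2 * real (xpos v) + 3 else 2 * real v + 1)"

definition Rc :: "nat \<Rightarrow> nat \<Rightarrow> rect" where
  "Rc n v = ((xl n v, xr n v), (yl n v, yr n v))"

definition adj :: "nat \<Rightarrow> nat \<Rightarrow> bool" where
  "adj u v \<longleftrightarrow> (u < 4 \<and> 4 \<le> v \<and> v < 7) \<or> (v < 4 \<and> 4 \<le> u \<and> u < 7) \<or>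
     (u < 2 \<and> 7 \<le> v) \<or> (v < 2 \<and> 7 \<le> u)"

lemma lt7: "(u::nat) < 7 \<Longrightarrow> u = 0 \<or> u = 1 \<or> u = 2 \<or> u = 3 \<or> u = 4 \<or> u = 5 \<or> u = 6"
  by auto

lemma proper_Rc: "7 \<le> n \<Longrightarrow> proper_rect (Rc n v)"
proof (cases "v < 7")
  case True
  assume "7 \<le> n"
  then show ?thesis using lt7[OF True]
    by (elim disjE; simp add: Rc_def proper_rect_def xl_def xr_def yl_def yr_def xpos_def ypos_def)
qed (auto simp: Rc_def proper_rect_def xl_def xr_def yl_def yr_def)

lemma key:
  assumes n: "7 \<le> n" and uv: "u < n" "v < n" "u \<noteq> v"
  shows "(ov (snd (Rc n u)) (snd (Rc n v)) \<or> ov (fst (Rc n u)) (fst (Rc n v)) \<longleftrightarrow> adj u v) \<and>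
         \<not> (ov (snd (Rc n u)) (snd (Rc n v)) \<and> ov (fst (Rc n u)) (fst (Rc n v)))"
proof (cases "u < 7")
  case True
  note u = True
  show ?thesis
  proof (cases "v < 7")
    case True
    show ?thesis using u True uv n
      by (insert lt7[OF u] lt7[OF True], elim disjE; simp add: Rc_def ov_def adj_def xl_def xr_def yl_def yr_def xpos_def ypos_def)
  next
    case False
    show ?thesis using u False uv n
      by (insert lt7[OF u], elim disjE; simp add: Rc_def ov_def adj_def xl_def xr_def yl_def yr_def xpos_def ypos_def)
  qed
next
  case False
  note u = False
  show ?thesis
  proof (cases "v < 7")
    case True
    show ?thesis using u True uv n
      by (insert lt7[OF True], elim disjE; simp add: Rc_def ov_def adj_def xl_def xr_def yl_def yr_def xpos_def ypos_def)
  next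
    case False
    have "u < v \<or> v < u" using uv by linarith
    then have "real u + 1 \<le> real v \<or> real v + 1 \<le> real u" by (metis Suc_leI of_nat_Suc of_nat_le_iff add.commute)
    then show ?thesis using u False uv n
      by (auto simp: Rc_def ov_def adj_def xl_def xr_def yl_def yr_def)
  qed
qed

lemma adj_sym: "adj u v \<longleftrightarrow> adj v u" by (auto simp: adj_def)
lemma adj_irr: "\<not> adj u u" by (auto simp: adj_def)

lemma part2:
  assumes n: "7 \<le> n"
  shows "\<exists>(V :: nat set) E. TRVG V E \<and> bipartite V E \<and> card V = n \<and> card E = 2 * n - 2"
proof -
  define P where "P = {(u,v). u < n \<and> v < n \<and> u < v \<and> adj u v}"
  define E where "E = (\<lambda>(u,v). {u,v}) ` P"
  define V where "V = {0..<n}"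
  have memE: "{u,v} \<in> E \<longleftrightarrow> adj u v" if "u < n" "v < n" for u v
  proof
    assume "{u,v} \<in> E"
    then obtain a b where ab: "(a,b) \<in> P" "{u,v} = {a,b}" unfolding E_def by auto
    then have "(u = a \<and> v = b) \<or> (u = b \<and> v = a)" by (auto simp: doubleton_eq_iff)
    then show "adj u v" using ab(1) adj_sym unfolding P_def by auto
  next
    assume a: "adj u v"
    then have "u \<noteq> v" using adj_irr by auto
    then have "u < v \<or> v < u" by linarith
    then show "{u,v} \<in> E"
    proof
      assume "u < v" then have "(u,v) \<in> P" using a that unfolding P_def by auto
      then show ?thesis unfolding E_def by force
    next
      assume "v < u" then have "(v,u) \<in> P" using a that adj_sym unfolding P_def by auto
      then have "{v,u} \<in> E" unfolding E_def by force
      then show ?thesis by (simp add: insert_commute)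
    qed
  qed
  have TR: "TRVG V E"
    unfolding TRVG_def
  proof (intro conjI exI[of _ "Rc n"])
    show "simple_graph V E" unfolding simple_graph_def V_def E_def P_def
      using adj_irr by fastforce
    show "\<forall>v\<in>V. proper_rect (Rc n v)" using proper_Rc[OF n] by auto
    show "\<forall>u\<in>V. \<forall>v\<in>V. u \<noteq> v \<longrightarrow> rect_interior (Rc n u) \<inter> rect_interior (Rc n v) = {}"
      using key[OF n] disj_iff[OF proper_Rc[OF n] proper_Rc[OF n]] unfolding V_def by auto
    show "\<forall>u\<in>V. \<forall>v\<in>V. u \<noteq> v \<longrightarrow> ({u, v} \<in> E \<longleftrightarrow> rect_visible (Rc n u) (Rc n v))"
      using key[OF n] vis_iff[OF proper_Rc[OF n] proper_Rc[OF n]] memE unfolding V_def by auto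
  qed
  have BP: "bipartite V E" unfolding bipartite_def
  proof (rule exI[of _ "{0..<4}"], rule exI[of _ "V - {0..<4}"], intro conjI)
    show "{0..<(4::nat)} \<union> (V - {0..<4}) = V" unfolding V_def using n by auto
    show "{0..<(4::nat)} \<inter> (V - {0..<4}) = {}" by auto
    show "\<forall>e\<in>E. e \<inter> {0..<(4::nat)} \<noteq> {} \<and> e \<inter> (V - {0..<4}) \<noteq> {}"
      unfolding E_def P_def V_def adj_def by auto
  qed
  have inj: "inj_on (\<lambda>(u,v). {u,v}) P"
    unfolding inj_on_def P_def by (auto simp: doubleton_eq_iff)
  have Peq: "P = ({0..<4} \<times> {4..<7}) \<union> ({0,1} \<times> {7..<n})"
    unfolding P_def adj_def using n by auto
  have "card P = 4 * 3 + 2 * (n - 7)"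
    unfolding Peq by (subst card_Un_disjoint) (auto simp: card_cartesian_product)
  then have "card E = 2 * n - 2" unfolding E_def using card_image[OF inj] n by simp
  moreover have "card V = n" unfolding V_def by simp
  ultimately show ?thesis using TR BP by blast
qed


theorem theorem2:
  shows "(\<forall>(V :: 'a set) E. TRVG V E \<and> bipartite V E \<longrightarrow> card E \<le> 2 * card V - 2) \<and>
         (\<forall>n::nat. n \<ge> 7 \<longrightarrow>
            (\<exists>(V :: nat set) E. TRVG V E \<and> bipartite V E \<and> card V = n \<and> card E = 2 * n - 2))"
  using part1 part2 by blast

end
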